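(* Let $p$ be an odd prime, $n$ a positive integer, $q=p^n$, and let $f$ be a planar function on $\mathbb F_{q^2}$. Let $\theta\in\mathbb F_{q^2}^*$ be such that $\theta^{q+1}$ is a nonsquare in $\mathbb F_q$, and assume that for every $c\in\mathbb F_{q^2}$, \[\#\{x\in\mathbb F_{q^2}:f(x)=c\}=\#\{y\in\mathbb F_{q^2}:y^2=c\}.\] Then the set $\mathcal U_\theta:=\{(x,t\theta):x\in\mathbb F_{q^2},t\in\mathbb F_q\}\cup\{(\infty)\}$ is a unital in $\Pi(f)$. Furthermore, for such $\theta$, $\mathcal U_\theta$ is a unital in $\Pi(f)$ for each of the following planar functions $f$ on $\mathbb F_{q^2}$: (a) $f(x)=x^2$; (b) $f(x)=x^{p^k+1}$, where $k$ is an integer with $1\le k\le n$ and $2n/\gcd(2n,k)$ odd; (c) $f(x)=x^{(3^k+1)/2}$, where $p=3$ and $\gcd(k,2n)=1$.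
   Context: A function $f:\mathbb F_{q^2}\to\mathbb F_{q^2}$ is planar if for every $a\neq 0$ the map $x\mapsto f(x+a)-f(x)$ is a bijection. For planar $f$, $\Pi(f)$ is the projective plane with points $(x,y)\in\mathbb F_{q^2}^2$ and $(a)$ for $a\in\mathbb F_{q^2}\cup\{\infty\}$, and lines $L_{a,b}=\{(x,f(x+a)-b):x\in\mathbb F_{q^2}\}\cup\{(a)\}$ ($a,b\in\mathbb F_{q^2}$), $N_a=\{(a,y):y\in\mathbb F_{q^2}\}\cup\{(\infty)\}$ ($a\in\mathbb F_{q^2}$), $L_\infty=\{(a):a\in\mathbb F_{q^2}\cup\{\infty\}\}$, incidence being membership. A unital in $\Pi(f)$ is a set of $q^3+1$ points meeting every line in exactly $1$ or $q+1$ points. *)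

theory Defs
  imports Main "HOL-Computational_Algebra.Primes"
begin

text \<open>Points of \<Pi>(f): affine points (x,y) and ideal points (a), a \<in> F \<union> {\<infinity>};
  the ideal point (\<infinity>) is Ideal None, the point (a) is Ideal (Some a).\<close>
datatype 'a pl_point = Affine 'a 'a | Ideal "'a option"

datatype 'a pl_line = Lab 'a 'a | Nl 'a | Linf

definition planar :: "('a::field \<Rightarrow> 'a) \<Rightarrow> bool" where
  "planar f \<longleftrightarrow> (\<forall>a. a \<noteq> 0 \<longrightarrow> bij (\<lambda>x. f (x + a) - f x))"

fun line_points :: "('a::field \<Rightarrow> 'a) \<Rightarrow> 'a pl_line \<Rightarrow> 'a pl_point set" where
  "line_points f (Lab a b) = {Affine x (f (x + a) - b) | x. True} \<union> {Ideal (Some a)}"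
| "line_points f (Nl a) = {Affine a y | y. True} \<union> {Ideal None}"
| "line_points f Linf = range Ideal"

text \<open>A unital in \<Pi>(f), where the ambient field is F_{q^2}.\<close>
definition is_unital :: "nat \<Rightarrow> ('a::field \<Rightarrow> 'a) \<Rightarrow> 'a pl_point set \<Rightarrow> bool" where
  "is_unital q f U \<longleftrightarrow> finite U \<and> card U = q ^ 3 + 1 \<and>
     (\<forall>l. card (U \<inter> line_points f l) = 1 \<or> card (U \<inter> line_points f l) = q + 1)"

definition subfield_q :: "nat \<Rightarrow> 'a::field set" where
  "subfield_q q = {x. x ^ q = x}"

definition U_theta :: "nat \<Rightarrow> 'a::field \<Rightarrow> 'a pl_point set" where
  "U_theta q \<theta> = {Affine x (t * \<theta>) | x t. t \<in> subfield_q q} \<union> {Ideal None}"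

end

theory Submission
  imports Defs "HOL-Number_Theory.Residues" "HOL-Computational_Algebra.Polynomial"
begin


lemma pow_card_same:
  fixes x :: "'a::{field,finite}"
  shows   "x ^ card (UNIV :: 'a set) = x"
proof (cases "x = 0")
  case False
  have "x * (\<Prod>y\<in>UNIV-{0}. x * y) = x * x ^ (card (UNIV :: 'a set) - 1) * \<Prod>(UNIV-{0})"
    by (simp add: prod.distrib mult_ac)
  also have "x * x ^ (card (UNIV :: 'a set) - 1) = x ^ Suc (card (UNIV :: 'a set) - 1)"
    by (subst power_Suc) auto
  also have "Suc (card (UNIV :: 'a set) - 1) = card (UNIV :: 'a set)"
    using finite_UNIV_card_ge_0[where ?'a = 'a] by simp
  also have "(\<Prod>y\<in>UNIV-{0}. x * y) = (\<Prod>y\<in>UNIV-{0}. y)"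
    by (rule prod.reindex_bij_witness[of _ "\<lambda>y. y / x" "\<lambda>y. x * y"]) (use False in auto)
  finally show ?thesis
    by simp
qed (use finite_UNIV_card_ge_0[where ?'a = 'a] in auto)

lemma char_eq:
  assumes "prime p" "n > 0" "card (UNIV :: 'a::{field,finite} set) = (p ^ n) ^ 2"
  shows "CHAR('a) = p"
proof -
  have pos: "CHAR('a) > 0" by (rule finite_imp_CHAR_pos) simp
  have pr: "prime CHAR('a)" using prime_CHAR_semidom[OF pos] .
  have "CHAR('a) dvd p ^ (n*2)" using CHAR_dvd_CARD[where 'a='a] assms(3) by (simp add: power_mult)
  then have "CHAR('a) dvd p" using prime_dvd_power_iff[OF pr] assms(2) by simp
  then show ?thesis using primes_dvd_imp_eq pr assms(1) by blast
qed

lemma roots_bound: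
  fixes a b :: "'a::field"
  assumes "m \<ge> 2"
  shows "card {x. x ^ m = a * x + b} \<le> m"
proof -
  define P where "P = monom (1::'a) m + [:-b, -a:]"
  have dl: "degree [:-b, -a:] < degree (monom (1::'a) m)" using assms by (simp add: degree_monom_eq)
  have dP: "degree P = m" unfolding P_def using degree_add_eq_left[OF dl] by (simp add: degree_monom_eq)
  have "P \<noteq> 0" using dP assms by auto
  moreover have "{x. x ^ m = a * x + b} = {x. poly P x = 0}"
    by (auto simp: P_def poly_monom algebra_simps)
  ultimately show ?thesis using card_poly_roots_bound[of P] dP by simp
qed

lemma card_vimage_sum:
  fixes f :: "'b::finite \<Rightarrow> 'c"
  assumes "finite S"
  shows "card (f -` S) = (\<Sum>c\<in>S. card (f -` {c}))"
proof -
  have "f -` S = (\<Union>c\<in>S. f -` {c})" by auto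
  then show ?thesis by (simp only:) (rule card_UN_disjoint[OF assms], auto)
qed

locale ffq =
  fixes q :: nat and ty :: "'a::{field,finite} itself"
  assumes frob: "\<And>x y :: 'a. (x + y) ^ q = x ^ q + y ^ q"
    and card: "card (UNIV :: 'a set) = q ^ 2"
    and qodd: "odd q" and q3: "q \<ge> 3"
    and two: "(2::'a) \<noteq> 0"
begin

lemma frob_minus: "(- x :: 'a) ^ q = - (x ^ q)"
  using qodd by simp

lemma frob_diff: "(x - y :: 'a) ^ q = x ^ q - y ^ q"
  using frob[of x "-y"] frob_minus[of y] by simp

lemma pow_q2: "(x :: 'a) ^ (q * q) = x"
  using pow_card_same[of x] card by (simp add: power2_eq_square)

lemma pow_qq: "((x :: 'a) ^ q) ^ q = x"
  using pow_q2[of x] by (simp add: power_mult)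

lemma pow_unit: "(x :: 'a) \<noteq> 0 \<Longrightarrow> x ^ (q * q - 1) = 1"
proof -
  assume x: "x \<noteq> 0"
  have "x ^ (q * q - 1) * x = x ^ (q * q)" using q3
    by (metis Suc_diff_1 mult_pos_pos not_numeral_le_zero not_gr_zero power_Suc2)
  then show ?thesis using pow_q2[of x] x by simp
qed

definition F :: "'a set" where "F = subfield_q q"
definition V :: "'a set" where "V = {z. z ^ q = - z}"

lemma F_iff: "x \<in> F \<longleftrightarrow> x ^ q = x" by (simp add: F_def subfield_q_def)
lemma V_iff: "x \<in> V \<longleftrightarrow> x ^ q = - x" by (simp add: V_def)

lemma card_F_V: "card F = q \<and> card V = q"
proof -
  define \<phi> :: "'a \<Rightarrow> 'a" where "\<phi> x = x ^ q - x" for x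
  have add: "\<phi> (x - y) = \<phi> x - \<phi> y" for x y by (simp add: \<phi>_def frob_diff)
  have Fle: "card F \<le> q"
  proof -
    have "F = {x. x ^ q = 1 * x + 0}" by (auto simp: F_iff)
    then show ?thesis using roots_bound[of q 1 0] q3 by simp
  qed
  have Vle: "card V \<le> q"
  proof -
    have "V = {x. x ^ q = (-1) * x + 0}" by (auto simp: V_iff)
    then show ?thesis using roots_bound[of q "-1" 0] q3 by simp
  qed
  have rV: "range \<phi> \<subseteq> V"
    by (auto simp: V_iff \<phi>_def frob_diff pow_qq)
  have fib: "card (\<phi> -` {v}) = card F" if vr: "v \<in> range \<phi>" for v
  proof -
    obtain x0 where x0: "v = \<phi> x0" using vr by auto
    have "\<phi> -` {v} = (\<lambda>t. t + x0) ` F"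
    proof (auto simp: x0)
      fix x assume "\<phi> x = \<phi> x0"
      then have "x - x0 \<in> F" using add[of x x0] by (simp add: F_iff \<phi>_def)
      then show "x \<in> (\<lambda>t. t + x0) ` F" by (intro image_eqI[of _ _ "x - x0"]) auto
    next
      fix t assume "t \<in> F"
      then show "\<phi> (t + x0) = \<phi> x0" by (simp add: F_iff \<phi>_def frob)
    qed
    then show ?thesis by (simp add: card_image)
  qed
  have "\<phi> -` range \<phi> = UNIV" by auto
  then have "q ^ 2 = card (\<phi> -` range \<phi>)" using card by simp
  also have "\<dots> = (\<Sum>v\<in>range \<phi>. card (\<phi> -` {v}))" by (rule card_vimage_sum) simp
  also have "\<dots> = card (range \<phi>) * card F" using fib by simp
  finally have eq: "q * q = card (range \<phi>) * card F" by (simp add: power2_eq_square)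
  have rle: "card (range \<phi>) \<le> card V" using rV by (simp add: card_mono)
  have "card F = q"
  proof (rule ccontr)
    assume "card F \<noteq> q"
    then have "card F < q" using Fle by simp
    have "card (range \<phi>) * card F \<le> q * card F" using rle Vle by (simp add: mult_le_mono1)
    also have "\<dots> < q * q" using \<open>card F < q\<close> q3 by simp
    finally have "card (range \<phi>) * card F < q * q" .
    then show False using eq by simp
  qed
  moreover have "card (range \<phi>) = q" using eq calculation q3 by simp
  ultimately show ?thesis using rle Vle by simp
qed

lemma card_F: "card F = q" using card_F_V by simp
lemma card_V: "card V = q" using card_F_V by simp


end

context ffq begin
lemma sq_of_F:
  assumes "s \<in> F" shows "\<exists>\<mu>. \<mu> ^ 2 = s"
proof (cases "s = 0")
  case True then show ?thesis by (intro exI[of _ 0]) simp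
next
  case False
  obtain r where r: "q = 2 * r + 1" using qodd oddE by blast
  define m where "m = 2 * r * (r + 1)"
  have m2: "2 * m = q * q - 1" by (simp add: m_def r algebra_simps)
  have mge: "m \<ge> 2" using q3 r by (simp add: m_def)
  define Sq where "Sq = (\<lambda>y::'a. y ^ 2) ` (UNIV - {0})"
  define R where "R = {x::'a. x ^ m = 0 * x + 1}"
  have SqR: "Sq \<subseteq> R"
  proof
    fix c assume "c \<in> Sq"
    then obtain y where y: "y \<noteq> 0" "c = y ^ 2" by (auto simp: Sq_def)
    have "c ^ m = y ^ (2 * m)" by (simp add: y power_mult)
    also have "\<dots> = 1" using m2 pow_unit[OF y(1)] by simp
    finally show "c \<in> R" by (simp add: R_def)
  qed
  have Rle: "card R \<le> m" unfolding R_def by (rule roots_bound[OF mge])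
  have fib2: "card ((\<lambda>y::'a. y ^ 2) -` {c}) = 2" if cS: "c \<in> Sq" for c
  proof -
    obtain y where y: "y \<noteq> 0" "c = y ^ 2" using cS by (auto simp: Sq_def)
    have "(\<lambda>y::'a. y ^ 2) -` {c} = {y, -y}"
      unfolding y(2) by (rule Set.set_eqI) (simp add: power2_eq_iff)
    moreover have "y \<noteq> - y"
    proof
      assume "y = - y"
      then have "y + y = 0" by (simp only: eq_neg_iff_add_eq_0)
      then have "2 * y = 0" by (simp only: mult_2)
      then show False using y(1) two by simp
    qed
    ultimately show ?thesis by simp
  qed
  have z0: "(\<lambda>y::'a. y ^ 2) -` {0} = {0}" by auto
  have "0 \<notin> Sq" by (auto simp: Sq_def)
  have inS: "x ^ 2 \<in> Sq" if "x \<noteq> 0" for x :: 'a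
    unfolding Sq_def using that by (intro imageI) simp
  have pre: "(\<lambda>y::'a. y ^ 2) -` (insert 0 Sq) = UNIV"
  proof (rule Set.set_eqI)
    fix x :: 'a
    show "x \<in> (\<lambda>y::'a. y ^ 2) -` (insert 0 Sq) \<longleftrightarrow> x \<in> UNIV"
      using inS[of x] by (cases "x = 0") simp_all
  qed
  have "q * q = card (UNIV :: 'a set)" using card by (simp add: power2_eq_square)
  also have "\<dots> = card ((\<lambda>y::'a. y ^ 2) -` (insert 0 Sq))" by (simp only: pre)
  also have "\<dots> = (\<Sum>c\<in>insert 0 Sq. card ((\<lambda>y::'a. y ^ 2) -` {c}))" by (rule card_vimage_sum) simp
  also have "\<dots> = card ((\<lambda>y::'a. y ^ 2) -` {0}) + (\<Sum>c\<in>Sq. card ((\<lambda>y::'a. y ^ 2) -` {c}))"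
    using \<open>0 \<notin> Sq\<close> by (rule sum.insert[rotated]) simp
  also have "(\<Sum>c\<in>Sq. card ((\<lambda>y::'a. y ^ 2) -` {c})) = (\<Sum>c\<in>Sq. 2)"
    by (rule sum.cong) (simp_all add: fib2)
  finally have "q * q = 1 + 2 * card Sq" using z0 by simp
  then have "card Sq = m" using m2 by simp
  have "finite R" by simp
  then have "Sq = R" using SqR Rle \<open>card Sq = m\<close> by (intro card_seteq) simp_all
  moreover have "s \<in> R"
  proof -
    have "s ^ q = s" using assms F_iff by simp
    then have "s ^ (2 * r) * s = s" using r by (simp add: power_Suc2 del: power_Suc)
    then have "s ^ (2 * r) = 1" using False by simp
    moreover have "s ^ m = (s ^ (2 * r)) ^ (r + 1)" unfolding m_def by (simp only: power_mult)
    ultimately have "s ^ m = 1" by simp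
    then show ?thesis by (simp add: R_def)
  qed
  ultimately show ?thesis by (auto simp: Sq_def)
qed

end


locale ffq2 = ffq q ty for q and ty :: "'a::{field,finite} itself" +
  fixes \<theta> :: 'a
  assumes th0: "\<theta> \<noteq> 0"
    and nsq: "\<not> (\<exists>y \<in> subfield_q q. y ^ 2 = \<theta> ^ (q + 1))"
begin

definition h :: "'a \<Rightarrow> 'a" where "h w = \<theta> ^ q * w - \<theta> * w ^ q"
definition g :: "'a \<Rightarrow> 'a" where "g y = h (y ^ 2)"

lemma h_diff: "h (x - y) = h x - h y"
  by (simp add: h_def frob_diff algebra_simps)

lemma h_0: "h 0 = 0" using q3 by (simp add: h_def)

lemma h_F: "t \<in> F \<Longrightarrow> h (t * \<theta>) = 0"
  by (simp add: h_def F_iff power_mult_distrib)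

lemma key: "(\<exists>t\<in>F. w - b = t * \<theta>) \<longleftrightarrow> h w = h b"
proof
  assume "\<exists>t\<in>F. w - b = t * \<theta>"
  then obtain t where t: "t \<in> F" "w - b = t * \<theta>" by blast
  have "h w - h b = h (t * \<theta>)" using h_diff[of w b] t(2) by simp
  then show "h w = h b" using h_F[OF t(1)] by simp
next
  assume e: "h w = h b"
  define t where "t = (w - b) / \<theta>"
  have "h (w - b) = 0" using e h_diff[of w b] by simp
  then have e2: "\<theta> ^ q * (w - b) = \<theta> * (w - b) ^ q" by (simp add: h_def)
  have tq0: "\<theta> ^ q \<noteq> 0" using th0 by simp
  have "t ^ q = (w - b) ^ q / \<theta> ^ q" by (simp add: t_def power_divide)
  also have "(w - b) ^ q = \<theta> ^ q * (w - b) / \<theta>" using e2 th0 by (simp add: field_simps)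
  finally have "t ^ q = t" using tq0 th0 by (simp add: t_def field_simps)
  then show "\<exists>t\<in>F. w - b = t * \<theta>" using th0 by (intro bexI[of _ t]) (simp_all add: F_iff t_def)
qed

lemma h_V: "h w \<in> V"
proof -
  have "(h w) ^ q = (\<theta> ^ q) ^ q * w ^ q - \<theta> ^ q * (w ^ q) ^ q"
    by (simp add: h_def frob_diff power_mult_distrib)
  also have "\<dots> = - h w" by (simp add: pow_qq h_def)
  finally show ?thesis by (simp add: V_iff)
qed

lemma g0: assumes "g y = 0" shows "y = 0"
proof (rule ccontr)
  assume y: "y \<noteq> 0"
  have "h (y ^ 2) = h 0" using assms h_0 by (simp add: g_def)
  then obtain t where t: "t \<in> F" "y ^ 2 - 0 = t * \<theta>" using key by blast
  have t0: "t \<noteq> 0" using t y by auto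
  have tq: "t ^ q = t" using t F_iff by simp
  define z where "z = y ^ (q + 1) / t"
  have "(y ^ (q + 1)) ^ q = y ^ (q * q) * y ^ q"
    by (simp add: power_add power_mult_distrib flip: power_mult)
  also have "\<dots> = y ^ (q + 1)" using pow_q2[of y] by (simp add: power_add mult.commute)
  finally have "z ^ q = z" using tq by (simp add: z_def power_divide)
  then have zF: "z \<in> subfield_q q" by (simp add: subfield_q_def)
  have yy: "(y ^ (q + 1)) ^ 2 = (y ^ 2) ^ (q + 1)" by (simp only: power_mult[symmetric] mult.commute)
  have "z ^ 2 = (y ^ 2) ^ (q + 1) / t ^ 2" by (simp only: z_def power_divide yy)
  also have "\<dots> = t ^ (q + 1) * \<theta> ^ (q + 1) / t ^ 2" using t(2) by (simp add: power_mult_distrib)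
  also have "t ^ (q + 1) = t ^ 2" using tq by (simp add: power2_eq_square)
  finally have "z ^ 2 = \<theta> ^ (q + 1)" using t0 by simp
  then show False using nsq zF by blast
qed

lemma g_scale: assumes "l ^ 2 \<in> F" shows "g (l * y) = l ^ 2 * g y"
proof -
  have "(l ^ 2) ^ q = l ^ 2" using assms F_iff by simp
  then show ?thesis by (simp add: g_def h_def power_mult_distrib algebra_simps)
qed

lemma g_zero: "g 0 = 0" using h_0 by (simp add: g_def)

lemma g_V: "g y \<in> V" by (simp add: g_def h_V)

lemma count:
  assumes b: "\<beta> \<in> V" "\<beta> \<noteq> 0"
  shows "card (g -` {\<beta>}) = q + 1"
proof -
  have injb: "inj_on (\<lambda>s. s * \<beta>) A" for A using b(2) by (auto simp: inj_on_def)
  have VF: "V = (\<lambda>s. s * \<beta>) ` F"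
  proof -
    have sub: "(\<lambda>s. s * \<beta>) ` F \<subseteq> V"
      using b(1) by (auto simp: V_iff F_iff power_mult_distrib)
    have "card ((\<lambda>s. s * \<beta>) ` F) = q" using card_F card_image[OF injb] by simp
    then show ?thesis using sub card_V by (intro card_seteq[symmetric]) simp_all
  qed
  define S where "S = (\<lambda>s. s * \<beta>) ` (F - {0})"
  have pre: "g -` S = UNIV - {0}"
  proof (rule Set.set_eqI)
    fix y
    show "y \<in> g -` S \<longleftrightarrow> y \<in> UNIV - {0}"
    proof
      assume "y \<in> g -` S"
      then obtain s where "s \<noteq> 0" "g y = s * \<beta>" by (auto simp: S_def)
      then have "g y \<noteq> 0" using b(2) by simp
      then show "y \<in> UNIV - {0}" using g_zero by auto
    next
      assume "y \<in> UNIV - {0}"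
      then have gy: "g y \<noteq> 0" using g0 by auto
      obtain s where s: "s \<in> F" "g y = s * \<beta>" using g_V[of y] VF by auto
      then have "s \<noteq> 0" using gy by auto
      then show "y \<in> g -` S" using s by (auto simp: S_def)
    qed
  qed
  have fib: "card (g -` {c}) = card (g -` {\<beta>})" if cS: "c \<in> S" for c
  proof -
    obtain s where s: "s \<in> F" "s \<noteq> 0" "c = s * \<beta>" using cS by (auto simp: S_def)
    obtain \<mu> where mu: "\<mu> ^ 2 = s" using sq_of_F[OF s(1)] by blast
    have mu0: "\<mu> \<noteq> 0" using mu s(2) by auto
    have invF: "(1 / \<mu>) ^ 2 \<in> F"
      using s(1) mu by (simp add: F_iff power_divide power_one_over)
    have "g -` {c} = (\<lambda>y. \<mu> * y) ` (g -` {\<beta>})"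
    proof (rule Set.set_eqI)
      fix x
      show "x \<in> g -` {c} \<longleftrightarrow> x \<in> (\<lambda>y. \<mu> * y) ` (g -` {\<beta>})"
      proof
        assume "x \<in> g -` {c}"
        then have gx: "g x = s * \<beta>" using s by simp
        have "g ((1 / \<mu>) * x) = (1 / \<mu>) ^ 2 * g x" using g_scale[OF invF] .
        also have "\<dots> = \<beta>" using gx mu s(2) by (simp add: power_divide)
        finally have "(1 / \<mu>) * x \<in> g -` {\<beta>}" by simp
        moreover have "x = \<mu> * ((1 / \<mu>) * x)" using mu0 by simp
        ultimately show "x \<in> (\<lambda>y. \<mu> * y) ` (g -` {\<beta>})" by blast
      next
        assume "x \<in> (\<lambda>y. \<mu> * y) ` (g -` {\<beta>})"
        then obtain y where y: "g y = \<beta>" "x = \<mu> * y" by auto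
        have "g x = s * \<beta>" using g_scale[of \<mu> y] mu s(1) y by simp
        then show "x \<in> g -` {c}" using s by simp
      qed
    qed
    moreover have "inj_on (\<lambda>y. \<mu> * y) (g -` {\<beta>})" using mu0 by (auto simp: inj_on_def)
    ultimately show ?thesis using card_image by metis
  qed
  have "q * q - 1 = card (UNIV - {0::'a})" using card by (simp add: power2_eq_square)
  also have "\<dots> = card (g -` S)" by (simp only: pre)
  also have "\<dots> = (\<Sum>c\<in>S. card (g -` {c}))" by (rule card_vimage_sum) simp
  also have "\<dots> = (\<Sum>c\<in>S. card (g -` {\<beta>}))" by (rule sum.cong) (simp_all add: fib)
  also have "\<dots> = card S * card (g -` {\<beta>})" by simp
  also have "card S = q - 1"
  proof -
    have "0 \<in> F" using q3 by (simp add: F_iff)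
    then have "card (F - {0}) = q - 1" using card_F by simp
    then show ?thesis unfolding S_def using card_image[OF injb] by simp
  qed
  finally have e0: "q * q - 1 = (q - 1) * card (g -` {\<beta>})" .
  obtain k where k: "q = k + 1" using q3 by (intro that[of "q - 1"]) simp
  have "q * q - 1 = (q - 1) * (q + 1)" by (simp add: k algebra_simps)
  then have e: "(q - 1) * (q + 1) = (q - 1) * card (g -` {\<beta>})" using e0 by simp
  have "q - 1 > 0" using q3 by simp
  then show ?thesis using e nat_mult_eq_cancel1 by metis
qed

lemma line_count:
  "card {y. \<exists>t\<in>F. y ^ 2 - b = t * \<theta>} = 1 \<or> card {y. \<exists>t\<in>F. y ^ 2 - b = t * \<theta>} = q + 1"
proof -
  have eq: "{y. \<exists>t\<in>F. y ^ 2 - b = t * \<theta>} = g -` {h b}"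
    by (auto simp: key g_def)
  show ?thesis
  proof (cases "h b = 0")
    case True
    have "g -` {h b} = {0}" using True g0 g_zero by auto
    then show ?thesis using eq by simp
  next
    case False
    then show ?thesis using eq count[OF h_V False] by simp
  qed
qed


lemma U_eq: "U_theta q \<theta> = (\<lambda>(x, t). Affine x (t * \<theta>)) ` (UNIV \<times> F) \<union> {Ideal None}"
  by (auto simp: U_theta_def F_def)

lemma card_U: "finite (U_theta q \<theta>) \<and> card (U_theta q \<theta>) = q ^ 3 + 1"
proof -
  have inj: "inj_on (\<lambda>(x, t). Affine x (t * \<theta>)) (UNIV \<times> F)"
    using th0 by (auto simp: inj_on_def)
  have c1: "card ((\<lambda>(x, t). Affine x (t * \<theta>)) ` (UNIV \<times> F)) = q ^ 3"
    using card_image[OF inj] card card_F by (simp add: card_cartesian_product power_numeral_reduce)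
  have "Ideal None \<notin> (\<lambda>(x, t). Affine x (t * \<theta>)) ` (UNIV \<times> F)" by auto
  then show ?thesis using c1 unfolding U_eq by simp
qed

lemma lab_count:
  fixes f :: "'a \<Rightarrow> 'a"
  assumes fib: "\<forall>c. card {x. f x = c} = card {y. y ^ 2 = c}"
  shows "card {x. \<exists>t\<in>F. f (x + a) - b = t * \<theta>} = card {y. \<exists>t\<in>F. y ^ 2 - b = t * \<theta>}"
proof -
  define Sb where "Sb = (\<lambda>t. b + t * \<theta>) ` F"
  have "{x. \<exists>t\<in>F. f (x + a) - b = t * \<theta>} = (\<lambda>x. x - a) ` (f -` Sb)"
  proof (rule Set.set_eqI)
    fix x
    show "x \<in> {x. \<exists>t\<in>F. f (x + a) - b = t * \<theta>} \<longleftrightarrow> x \<in> (\<lambda>x. x - a) ` (f -` Sb)"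
    proof
      assume "x \<in> {x. \<exists>t\<in>F. f (x + a) - b = t * \<theta>}"
      then obtain t where t: "t \<in> F" "f (x + a) - b = t * \<theta>" by blast
      then have "x + a \<in> f -` Sb" by (auto simp: Sb_def algebra_simps)
      then show "x \<in> (\<lambda>x. x - a) ` (f -` Sb)" by (intro image_eqI[of _ _ "x + a"]) simp_all
    next
      assume "x \<in> (\<lambda>x. x - a) ` (f -` Sb)"
      then obtain z t where "x = z - a" "t \<in> F" "f z = b + t * \<theta>" by (auto simp: Sb_def)
      then show "x \<in> {x. \<exists>t\<in>F. f (x + a) - b = t * \<theta>}" by auto
    qed
  qed
  moreover have "inj (\<lambda>x::'a. x - a)" by (auto simp: inj_on_def)
  ultimately have "card {x. \<exists>t\<in>F. f (x + a) - b = t * \<theta>} = card (f -` Sb)"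
    by (simp add: card_image inj_on_subset)
  also have "\<dots> = (\<Sum>c\<in>Sb. card (f -` {c}))" by (rule card_vimage_sum) (simp add: Sb_def)
  also have "\<dots> = (\<Sum>c\<in>Sb. card ((\<lambda>y::'a. y ^ 2) -` {c}))"
  proof (rule sum.cong)
    fix c show "card (f -` {c}) = card ((\<lambda>y::'a. y ^ 2) -` {c})" using fib by (simp add: vimage_def)
  qed simp
  also have "\<dots> = card ((\<lambda>y::'a. y ^ 2) -` Sb)" by (rule card_vimage_sum[symmetric]) (simp add: Sb_def)
  also have "(\<lambda>y::'a. y ^ 2) -` Sb = {y. \<exists>t\<in>F. y ^ 2 - b = t * \<theta>}"
    by (auto simp: Sb_def algebra_simps)
  finally show ?thesis .
qed

lemma unital:
  fixes f :: "'a \<Rightarrow> 'a"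
  assumes fib: "\<forall>c. card {x. f x = c} = card {y. y ^ 2 = c}"
  shows "is_unital q f (U_theta q \<theta>)"
  unfolding is_unital_def
proof (intro conjI allI)
  show "finite (U_theta q \<theta>)" "card (U_theta q \<theta>) = q ^ 3 + 1" using card_U by simp_all
next
  fix l
  show "card (U_theta q \<theta> \<inter> line_points f l) = 1 \<or> card (U_theta q \<theta> \<inter> line_points f l) = q + 1"
  proof (cases l)
    case Linf
    have "U_theta q \<theta> \<inter> line_points f l = {Ideal None}" by (auto simp: Linf U_theta_def)
    then show ?thesis by simp
  next
    case (Nl a)
    have e: "U_theta q \<theta> \<inter> line_points f l = (\<lambda>t. Affine a (t * \<theta>)) ` F \<union> {Ideal None}"
      by (auto simp: Nl U_theta_def F_def)
    have "inj_on (\<lambda>t. Affine a (t * \<theta>)) F" using th0 by (auto simp: inj_on_def)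
    then have "card ((\<lambda>t. Affine a (t * \<theta>)) ` F) = q" using card_F card_image by metis
    moreover have "Ideal None \<notin> (\<lambda>t. Affine a (t * \<theta>)) ` F" by auto
    ultimately show ?thesis unfolding e by simp
  next
    case (Lab a b)
    have e: "U_theta q \<theta> \<inter> line_points f l =
      (\<lambda>x. Affine x (f (x + a) - b)) ` {x. \<exists>t\<in>F. f (x + a) - b = t * \<theta>}"
      by (auto simp: Lab U_theta_def F_def)
    have "inj (\<lambda>x. Affine x (f (x + a) - b))" by (auto simp: inj_on_def)
    then have "card (U_theta q \<theta> \<inter> line_points f l) = card {x. \<exists>t\<in>F. f (x + a) - b = t * \<theta>}"
      unfolding e by (simp add: card_image inj_on_subset)
    then show ?thesis using lab_count[OF fib] line_count by simp
  qed
qed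

end


lemma it1:
  fixes x :: "'a::field"
  assumes "x ^ r = x" shows "x ^ (r ^ j) = x"
proof (induction j)
  case (Suc j)
  have "x ^ (r ^ Suc j) = (x ^ (r ^ j)) ^ r" by (simp add: power_mult power_Suc2 del: power_Suc)
  then show ?case using Suc assms by simp
qed simp

lemma it2:
  fixes x :: "'a::field"
  assumes x0: "x \<noteq> 0" and xr: "x ^ r * x = 1"
  shows "(even j \<longrightarrow> x ^ (r ^ j) = x) \<and> (odd j \<longrightarrow> x ^ (r ^ j) * x = 1)"
proof (induction j)
  case (Suc j)
  have e: "x ^ (r ^ Suc j) = (x ^ (r ^ j)) ^ r" by (simp add: power_mult power_Suc2 del: power_Suc)
  have xr': "x ^ r = 1 / x" using xr x0 by (simp add: field_simps)
  show ?case
  proof (cases "even j")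
    case True
    then show ?thesis using Suc e xr by simp
  next
    case False
    then have "x ^ (r ^ j) = 1 / x" using Suc x0 by (simp add: field_simps)
    then have "x ^ (r ^ Suc j) = 1 / x ^ r" using e by (simp add: power_one_over)
    then show ?thesis using False xr' x0 by simp
  qed
qed simp

lemma bz:
  fixes x :: "'a::field"
  assumes fr: "x ^ (p ^ (2 * n)) = x" and k: "k \<noteq> 0"
  shows "\<exists>j. x ^ (p ^ gcd k (2 * n)) = x ^ ((p ^ k) ^ j)"
proof -
  obtain j l where jl: "k * j = 2 * n * l + gcd k (2 * n)" using bezout_nat[OF k] by blast
  have "x ^ ((p ^ k) ^ j) = x ^ (p ^ (2 * n * l) * p ^ gcd k (2 * n))"
    by (simp add: jl power_add flip: power_mult)
  also have "\<dots> = (x ^ ((p ^ (2 * n)) ^ l)) ^ (p ^ gcd k (2 * n))"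
    by (simp add: power_mult)
  also have "x ^ ((p ^ (2 * n)) ^ l) = x" using it1[OF fr] .
  finally show ?thesis by metis
qed

lemma kb:
  fixes x :: "'a::field"
  assumes fr: "\<And>y::'a. y ^ (p ^ (2 * n)) = y" and k: "1 \<le> k"
    and od: "odd ((2 * n) div gcd (2 * n) k)" and xd: "x ^ (p ^ k + 1) = 1"
  shows "x ^ 2 = 1"
proof -
  have x0: "x \<noteq> 0" using xd by (auto simp: power_0_left)
  have "x ^ (p ^ k + 1) = x ^ (p ^ k) * x" by (simp only: power_add power_one_right)
  then have xr: "x ^ (p ^ k) * x = 1" using xd by (simp only:)
  define g where "g = gcd k (2 * n)"
  obtain j where j: "x ^ (p ^ g) = x ^ ((p ^ k) ^ j)" using bz[OF fr, of k] k by (auto simp: g_def)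
  note I = it2[OF x0 xr, of j]
  show ?thesis
  proof (cases "even j")
    case True
    then have xg: "x ^ (p ^ g) = x" using I j by simp
    obtain k' where "k = g * k'" unfolding g_def by (metis gcd_dvd1 dvdE)
    then have "x ^ (p ^ k) = x" using it1[OF xg, of k'] by (simp add: power_mult)
    then show ?thesis using xr by (simp add: power2_eq_square)
  next
    case False
    then have xg: "x ^ (p ^ g) * x = 1" using I j by simp
    define m where "m = (2 * n) div g"
    have gm: "g * m = 2 * n" unfolding m_def g_def by (simp add: gcd.commute)
    have "odd m" using od by (simp add: m_def g_def gcd.commute)
    then have "x ^ ((p ^ g) ^ m) * x = 1" using it2[OF x0 xg, of m] by simp
    moreover have "(p ^ g) ^ m = p ^ (2 * n)" using gm by (simp flip: power_mult)
    ultimately show ?thesis using fr[of x] by (simp add: power2_eq_square)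
  qed
qed

lemma three_pow_mod8: "odd k \<Longrightarrow> (3::nat) ^ k mod 8 = 3"
proof -
  assume "odd k"
  then obtain i where i: "k = 2 * i + 1" using oddE by blast
  have "(9::nat) ^ i mod 8 = 1"
    using power_mod[of "9::nat" 8 i] by simp
  then show ?thesis using i
    by (simp add: power_add power_mult mod_mult_right_eq[of 3, symmetric])
qed

lemma kc:
  fixes x :: "'a::field"
  assumes fr: "\<And>y::'a. y ^ (3 ^ (2 * n)) = y" and k: "gcd k (2 * n) = 1"
    and xd: "x ^ ((3 ^ k + 1) div 2) = 1"
  shows "x ^ 2 = 1"
proof -
  have k0: "k \<noteq> 0"
  proof
    assume "k = 0"
    with k have "2 * n = 1" by simp
    then show False by presburger
  qed
  have ko: "odd k"
  proof
    assume "even k"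
    then have "2 dvd gcd k (2 * n)" by simp
    then show False using k by simp
  qed
  have m8: "(3::nat) ^ k mod 8 = 3" using three_pow_mod8[OF ko] .
  define D where "D = ((3::nat) ^ k + 1) div 2"
  have D2: "3 ^ k + 1 = 2 * D" using m8 unfolding D_def by presburger
  have D4: "D mod 4 = 2" using m8 D2 by presburger
  have x0: "x \<noteq> 0" using xd by (auto simp: power_0_left)
  have xD: "x ^ D = 1" using xd by (simp add: D_def)
  have "(x ^ D) ^ 2 = x ^ (3 ^ k + 1)" by (simp only: D2 power_mult[symmetric] mult.commute)
  then have "x ^ (3 ^ k + 1) = 1" using xD by simp
  moreover have "x ^ (3 ^ k + 1) = x ^ (3 ^ k) * x" by (simp only: power_add power_one_right)
  ultimately have "x ^ (3 ^ k) * x = 1" by (simp only:)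
  note xr = this
  obtain j where j: "x ^ (3 ^ gcd k (2 * n)) = x ^ ((3 ^ k) ^ j)" using bz[OF fr k0] by blast
  then have j': "x ^ 3 = x ^ ((3 ^ k) ^ j)" using k by simp
  have x4: "x ^ 4 = 1"
  proof (cases "even j")
    case True
    then have "x ^ 3 = x" using it2[OF x0 xr, of j] j' by simp
    then have "x ^ 2 * x = 1 * x" by (simp add: numeral_3_eq_3 power2_eq_square)
    then have "x ^ 2 = 1" using x0 by simp
    then show ?thesis by (metis power_mult num_double numeral_times_numeral power_one)
  next
    case False
    then have "x ^ 3 * x = 1" using it2[OF x0 xr, of j] j' by simp
    moreover have "x ^ 4 = x ^ 3 * x"
    proof -
      have "(4::nat) = Suc 3" by simp
      then show ?thesis by (simp only: power_Suc2)
    qed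
    ultimately show ?thesis by simp
  qed
  have "D = 4 * (D div 4) + 2" using D4 by presburger
  then have "x ^ D = (x ^ 4) ^ (D div 4) * x ^ 2" by (metis power_add power_mult)
  then show ?thesis using x4 xD by simp
qed

context ffq begin

lemma mono_fib:
  assumes ev: "even d" and ker: "\<And>x::'a. x ^ d = 1 \<Longrightarrow> x ^ 2 = 1"
  shows "\<forall>c. card {x::'a. x ^ d = c} = card {y. y ^ 2 = c}"
proof
  fix c :: 'a
  have m1: "-1 \<in> F" using qodd by (simp add: F_iff)
  obtain i :: 'a where i: "i ^ 2 = -1" using sq_of_F[OF m1] by blast
  define e where "e = d div 2"
  have de: "d = 2 * e" using ev by (simp add: e_def)
  have m1ne: "(-1::'a) \<noteq> 1"
  proof
    assume "(-1::'a) = 1"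
    then have "(1::'a) + 1 = 0" by (metis add.left_inverse)
    then show False using two by (simp add: one_add_one)
  qed
  have eo: "odd e"
  proof
    assume "even e"
    then have "i ^ d = 1" using i by (simp add: de power_mult)
    then have "i ^ 2 = 1" by (rule ker)
    then show False using i m1ne by simp
  qed
  define \<psi> where "\<psi> x = x ^ e" for x :: 'a
  have inj: "inj \<psi>"
  proof (rule injI)
    fix x z assume xz: "\<psi> x = \<psi> z"
    show "x = z"
    proof (cases "z = 0")
      case True
      then have "x ^ e = 0" using xz eo by (simp add: \<psi>_def power_0_left) (metis odd_pos neq0_conv)
      then show ?thesis using True by simp
    next
      case False
      define u where "u = x / z"
      have "u ^ e = 1" using xz False by (simp add: u_def \<psi>_def power_divide)
      then have "u ^ d = 1" by (simp add: de power_mult mult.commute)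
      then have "u ^ 2 = 1" by (rule ker)
      then have "u = 1 \<or> u = -1" using power2_eq_iff[of u 1] by simp
      moreover have "u \<noteq> -1"
      proof
        assume "u = -1"
        then have "u ^ e = -1" using eo by simp
        then show False using \<open>u ^ e = 1\<close> m1ne by simp
      qed
      ultimately have "u = 1" by simp
      then show ?thesis using False by (simp add: u_def)
    qed
  qed
  have surj: "surj \<psi>" by (rule finite_UNIV_inj_surj[OF _ inj]) simp
  have eq: "{x::'a. x ^ d = c} = \<psi> -` {y. y ^ 2 = c}"
    by (auto simp: \<psi>_def de power_mult mult.commute)
  have "card (\<psi> -` {y. y ^ 2 = c}) = card {y. y ^ 2 = c}"
    by (rule card_vimage_inj[OF inj]) (use surj in simp)
  then show "card {x::'a. x ^ d = c} = card {y. y ^ 2 = c}"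
    unfolding eq .
qed

end


lemma k_odd: assumes "gcd k (2 * n) = (1::nat)" shows "odd k"
proof
  assume "even k"
  then have "2 dvd gcd k (2 * n)" by (intro gcd_greatest) simp_all
  then show False using assms by simp
qed

lemma D_even: "odd k \<Longrightarrow> even (((3::nat) ^ k + 1) div 2)"
proof -
  assume "odd k"
  then have "(3::nat) ^ k mod 8 = 3" by (rule three_pow_mod8)
  then show ?thesis by presburger
qed

theorem theorem2p4:
  fixes p n q :: nat and \<theta> :: "'a::{field,finite}"
  assumes "prime p" and "odd p" and "n > 0" and "q = p ^ n"
    and "card (UNIV :: 'a set) = q ^ 2"
    and "\<theta> \<noteq> 0"
    and "\<not> (\<exists>y \<in> subfield_q q. y ^ 2 = \<theta> ^ (q + 1))"
  shows "(\<forall>f :: 'a \<Rightarrow> 'a. planar f \<and>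
            (\<forall>c. card {x. f x = c} = card {y. y ^ 2 = c})
            \<longrightarrow> is_unital q f (U_theta q \<theta>))
    \<and> is_unital q (\<lambda>x. x ^ 2) (U_theta q \<theta>)
    \<and> (\<forall>k. 1 \<le> k \<and> k \<le> n \<and> odd ((2 * n) div gcd (2 * n) k)
            \<longrightarrow> is_unital q (\<lambda>x. x ^ (p ^ k + 1)) (U_theta q \<theta>))
    \<and> (p = 3 \<longrightarrow> (\<forall>k. gcd k (2 * n) = 1
            \<longrightarrow> is_unital q (\<lambda>x. x ^ ((3 ^ k + 1) div 2)) (U_theta q \<theta>)))"
proof -
  have p2: "p \<ge> 2" using assms(1) by (simp add: prime_ge_2_nat)
  have p3: "p \<ge> 3" using p2 assms(2) by presburger
  have "p \<le> p ^ n" using p3 assms(3) by (intro self_le_power) simp_all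
  then have q3: "q \<ge> 3" using p3 assms(4) by simp
  have qodd: "odd q" using assms(2,4) by simp
  have ch: "CHAR('a) = p" using char_eq[of p n] assms(1,3,4,5) by simp
  have frob: "(x + y) ^ q = x ^ q + y ^ q" for x y :: 'a
    by (rule freshmans_dream'[of q n]) (simp_all add: ch assms(1,4))
  have two: "(2::'a) \<noteq> 0"
  proof
    assume "(2::'a) = 0"
    then have "of_nat 2 = (0::'a)" by simp
    then have "CHAR('a) dvd 2" by (simp only: of_nat_eq_0_iff_char_dvd)
    then have "p dvd 2" using ch by simp
    then have "p \<le> 2" by (rule dvd_imp_le) simp
    then show False using p3 by simp
  qed
  interpret ffq2 q "TYPE('a)" \<theta>
    by unfold_locales (use frob assms(5,6,7) qodd q3 two in simp_all)
  have fr: "y ^ (p ^ (2 * n)) = y" for y :: 'a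
  proof -
    have "p ^ (2 * n) = q * q" using assms(4) by (simp add: power_mult power2_eq_square mult.commute)
    then show ?thesis using pow_q2 by simp
  qed
  show ?thesis
  proof (intro conjI allI impI)
    fix f :: "'a \<Rightarrow> 'a"
    assume "planar f \<and> (\<forall>c. card {x. f x = c} = card {y. y ^ 2 = c})"
    then show "is_unital q f (U_theta q \<theta>)" using unital by blast
  next
    show "is_unital q (\<lambda>x. x ^ 2) (U_theta q \<theta>)" by (rule unital) simp
  next
    fix k assume k: "1 \<le> k \<and> k \<le> n \<and> odd ((2 * n) div gcd (2 * n) k)"
    have ev: "even (p ^ k + 1)" using assms(2) by simp
    have "\<forall>c. card {x::'a. x ^ (p ^ k + 1) = c} = card {y. y ^ 2 = c}"
      by (rule mono_fib[OF ev]) (use kb[OF fr] k in blast)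
    then show "is_unital q (\<lambda>x. x ^ (p ^ k + 1)) (U_theta q \<theta>)" by (rule unital)
  next
    fix k assume p3': "p = 3" and k: "gcd k (2 * n) = 1"
    have fr3: "y ^ (3 ^ (2 * n)) = y" for y :: 'a using fr p3' by simp
    have ev: "even (((3::nat) ^ k + 1) div 2)" using D_even[OF k_odd[OF k]] .
    have "\<forall>c. card {x::'a. x ^ ((3 ^ k + 1) div 2) = c} = card {y. y ^ 2 = c}"
      by (rule mono_fib[OF ev]) (use kc[OF fr3 k] in blast)
    then show "is_unital q (\<lambda>x. x ^ ((3 ^ k + 1) div 2)) (U_theta q \<theta>)" by (rule unital)
  qed
qed

end
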